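(* Let $d\ge 2$ be even, let $\widetilde{d}\ge 1$, let $u^*\in\mathbb{R}^{\widetilde{d}}$ with $\|u^*\|=1$, and let $\eta$ be a noise parameter with $0\le \eta < \frac{1}{10d}$. Let $\mathcal{D}$ be the distribution on $\mathbb{R}^{\widetilde{d}d}\times\{\pm1\}$ described in the context. Then there exists a max-margin classifier $\nu^*$ for $\mathcal{D}$, i.e. a probability distribution $$\nu^*\in\arg\max_{\nu\in\mathcal{P}(\mathbb{S}^{d\widetilde{d}+1})}\ \min_{(x,y)\in\operatorname{supp}(\mathcal{D})} y\cdot f(\nu,x),$$ such that for every $(x,y)$ in the support of $\mathcal{D}$ there is a constant $c>0$ with (i) $\big\|(\nabla_x \mathcal{L}(\nu^*,(x,y)))_j\big\| = c$ for every $j\in\{1,\dots,d/2\}$, and (ii) $\big\|(\nabla_x \mathcal{L}(\nu^*,(x,y)))_j\big\| = 0$ for every $j\in\{d/2+1,\dots,d\}$, where $(v)_j\in\mathbb{R}^{\widetilde{d}}$ denotes the $j$-th block of a vector $v\in\mathbb{R}^{\widetilde{d}d}$ viewed as a concatenation of $d$ blocks of dimension $\widetilde{d}$.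
   Context: Data distribution $\mathcal{D}$: a sample $(x,y)$ is generated by drawing $y\in\{+1,-1\}$ with probability $1/2$ each, drawing an index $j$ uniformly at random from $\{1,\dots,d/2\}$, drawing $g_1,\dots,g_d\in\mathbb{R}^{\widetilde{d}}$ independently and uniformly from the Euclidean unit ball, and setting $x=(x_1,\dots,x_d)\in\mathbb{R}^{\widetilde{d}d}$ (concatenation of blocks $x_i\in\mathbb{R}^{\widetilde{d}}$) with $x_j = y u^* + \eta g_j$ and $x_i=\eta g_i$ for $i\neq j$. Infinite-width one-hidden-layer ReLU network: a network is a probability distribution $\nu$ over parameters $(w,r,b)\in\mathbb{R}\times\mathbb{R}^{\widetilde{d}d}\times\mathbb{R}$, with output $f(\nu,x)=\mathbb{E}_{(w,r,b)\sim\nu}[w\,\phi(\langle r,x\rangle+b)]$ where $\phi(t)=\max(t,0)$, and cross-entropy loss $\mathcal{L}(\nu,(x,y))=\log(1+\exp(-y f(\nu,x)))$. $\mathbb{S}^{d\widetilde{d}+1}$ is the Euclidean unit sphere in $\mathbb{R}^{\widetilde{d}d+2}$ (the parameter space of $(w,r,b)$), and $\mathcal{P}(\mathbb{S}^{d\widetilde{d}+1})$ is the set of probability distributions supported on it. $\nabla_x\mathcal{L}$ denotes the gradient of the loss with respect to the input $x$. *)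

theory Defs
  imports "HOL-Probability.Probability"
begin

text \<open>A vector of \<open>\<real>^(dt*d)\<close> is a function \<open>x :: nat \<Rightarrow> real\<close>
  using coordinates \<open>0..<dt*d\<close>; block \<open>j\<close> (1-based, \<open>1 \<le> j \<le> d\<close>) consists of the
  coordinates \<open>(j-1)*dt + k\<close>, \<open>k < dt\<close>.
  A parameter \<open>(w,r,b) \<in> \<real>^(dt*d+2)\<close> is a function \<open>\<theta> :: nat \<Rightarrow> real\<close> on \<open>0..<dt*d+2\<close>
  with \<open>w = \<theta> 0\<close>, \<open>r_n = \<theta> (Suc n)\<close> for \<open>n < dt*d\<close>, \<open>b = \<theta> (dt*d+1)\<close>.\<close>

definition relu :: "real \<Rightarrow> real" where
  "relu t = max t 0"

definition relu' :: "real \<Rightarrow> real" where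
  "relu' t = (if t > 0 then 1 else 0)"

definition block_norm :: "nat \<Rightarrow> (nat \<Rightarrow> real) \<Rightarrow> nat \<Rightarrow> real" where
  "block_norm dt v j = sqrt (\<Sum>k<dt. (v ((j - 1) * dt + k))\<^sup>2)"

definition preact :: "nat \<Rightarrow> (nat \<Rightarrow> real) \<Rightarrow> (nat \<Rightarrow> real) \<Rightarrow> real" where
  "preact N \<theta> x = (\<Sum>n<N. \<theta> (Suc n) * x n) + \<theta> (Suc N)"

definition param_space :: "nat \<Rightarrow> (nat \<Rightarrow> real) measure" where
  "param_space N = PiM {..<N + 2} (\<lambda>_. lborel)"

definition networks :: "nat \<Rightarrow> (nat \<Rightarrow> real) measure set" where
  "networks N = {\<nu>. sets \<nu> = sets (param_space N) \<and> prob_space \<nu> \<and>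
      (AE \<theta> in \<nu>. (\<Sum>i<N + 2. (\<theta> i)\<^sup>2) = 1)}"

definition net_out :: "nat \<Rightarrow> (nat \<Rightarrow> real) measure \<Rightarrow> (nat \<Rightarrow> real) \<Rightarrow> real" where
  "net_out N \<nu> x = (\<integral>\<theta>. \<theta> 0 * relu (preact N \<theta> x) \<partial>\<nu>)"

definition ce_loss :: "nat \<Rightarrow> (nat \<Rightarrow> real) measure \<Rightarrow> (nat \<Rightarrow> real) \<Rightarrow> real \<Rightarrow> real" where
  "ce_loss N \<nu> x y = ln (1 + exp (- y * net_out N \<nu> x))"

text \<open>Gradient of the loss w.r.t. the input, coordinate \<open>n\<close> (chain rule with the ReLU
  derivative convention \<open>relu'\<close>):
  \<open>\<nabla>_x L = -y \<sigma>(-y f) E[w \<phi>'(\<langle>r,x\<rangle>+b) r]\<close>.\<close>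
definition loss_grad :: "nat \<Rightarrow> (nat \<Rightarrow> real) measure \<Rightarrow> (nat \<Rightarrow> real) \<Rightarrow> real \<Rightarrow> nat \<Rightarrow> real" where
  "loss_grad N \<nu> x y n =
     - y * (exp (- y * net_out N \<nu> x) / (1 + exp (- y * net_out N \<nu> x))) *
     (\<integral>\<theta>. \<theta> 0 * relu' (preact N \<theta> x) * \<theta> (Suc n) \<partial>\<nu>)"

text \<open>Support of the data distribution \<open>\<D>\<close> (uniform draws from the unit ball have
  the closed unit ball as support).\<close>
definition data_support ::
  "nat \<Rightarrow> nat \<Rightarrow> (nat \<Rightarrow> real) \<Rightarrow> real \<Rightarrow> ((nat \<Rightarrow> real) \<times> real) set" where
  "data_support d dt u \<eta> = {(x, y). (y = 1 \<or> y = -1) \<and>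
     (\<exists>j\<in>{1..d div 2}. \<exists>g :: nat \<Rightarrow> nat \<Rightarrow> real.
        (\<forall>i\<in>{1..d}. sqrt (\<Sum>k<dt. (g i k)\<^sup>2) \<le> 1) \<and>
        (\<forall>i\<in>{1..d}. \<forall>k<dt. x ((i - 1) * dt + k) = (if i = j then y * u k else 0) + \<eta> * g i k)) \<and>
     (\<forall>n\<ge>dt * d. x n = 0)}"

definition margin :: "nat \<Rightarrow> nat \<Rightarrow> (nat \<Rightarrow> real) \<Rightarrow> real \<Rightarrow> (nat \<Rightarrow> real) measure \<Rightarrow> real" where
  "margin d dt u \<eta> \<nu> = (INF p\<in>data_support d dt u \<eta>. snd p * net_out (dt * d) \<nu> (fst p))"

definition max_margin :: "nat \<Rightarrow> nat \<Rightarrow> (nat \<Rightarrow> real) \<Rightarrow> real \<Rightarrow> (nat \<Rightarrow> real) measure \<Rightarrow> bool" where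
  "max_margin d dt u \<eta> \<nu> \<longleftrightarrow> \<nu> \<in> networks (dt * d) \<and>
     (\<forall>\<mu>\<in>networks (dt * d). margin d dt u \<eta> \<mu> \<le> margin d dt u \<eta> \<nu>)"

end

theory Submission
  imports Defs
begin

definition Gf :: "real \<Rightarrow> real \<Rightarrow> real \<Rightarrow> real" where
  "Gf M \<eta> p = (let \<tau> = 1 - M*\<eta>; la = 2*\<tau>\<^sup>2/(M+\<tau>\<^sup>2); \<mu> = 1 - la; c2 = \<tau> - \<mu>*p*\<eta>; c1 = c2 + \<mu>
     in M*c2\<^sup>2 + p*(c1\<^sup>2 - c2\<^sup>2) + la\<^sup>2*p\<^sup>2)"

lemma poly_id: "(M*(\<tau>-\<mu>*M*\<eta>)\<^sup>2 + M*((\<tau>-\<mu>*M*\<eta>+\<mu>)\<^sup>2 - (\<tau>-\<mu>*M*\<eta>)\<^sup>2) + la\<^sup>2*M\<^sup>2) - (M*(\<tau>-\<mu>*p*\<eta>)\<^sup>2 + p*((\<tau>-\<mu>*p*\<eta>+\<mu>)\<^sup>2 - (\<tau>-\<mu>*p*\<eta>)\<^sup>2) + la\<^sup>2*p\<^sup>2)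
  = (M - p) * ((\<mu>*(2*\<tau>+\<mu>) - 2*M*\<tau>*\<mu>*\<eta>) + (M*\<mu>\<^sup>2*\<eta>\<^sup>2 - 2*\<mu>\<^sup>2*\<eta> + la\<^sup>2)*(M+p))"
  for M p \<tau> \<mu> \<eta> la :: real
  by (simp add: power2_eq_square algebra_simps)

lemma Gf_M: assumes "M \<ge> 1" "0 \<le> \<eta>" "20*M*\<eta> < 1"
  shows "Gf M \<eta> M = 4*M\<^sup>2*(1-M*\<eta>)\<^sup>2/(M+(1-M*\<eta>)\<^sup>2)"
proof -
  define \<tau> where "\<tau> = 1 - M*\<eta>"
  define la where "la = 2*\<tau>\<^sup>2/(M+\<tau>\<^sup>2)"
  define \<mu> where "\<mu> = 1 - la"
  have pos: "M + \<tau>\<^sup>2 > 0" using assms by (simp add: add_pos_nonneg)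
  have e: "\<tau> - \<mu>*M*\<eta> + \<mu> = \<tau>*(1+\<mu>)" unfolding \<tau>_def by (simp add: algebra_simps)
  have "Gf M \<eta> M = M*(\<tau>*(1+\<mu>))\<^sup>2 + la\<^sup>2*M\<^sup>2"
    unfolding Gf_def Let_def \<tau>_def[symmetric] la_def[symmetric] \<mu>_def[symmetric] e
    by (simp add: algebra_simps)
  also have "1 + \<mu> = 2*M/(M+\<tau>\<^sup>2)" unfolding \<mu>_def la_def using pos by (simp add: field_simps)
  also have "M*(\<tau>*(2*M/(M+\<tau>\<^sup>2)))\<^sup>2 + la\<^sup>2*M\<^sup>2 = (4*M\<^sup>2*\<tau>\<^sup>2)*(M+\<tau>\<^sup>2)/(M+\<tau>\<^sup>2)\<^sup>2"
    unfolding la_def using pos by (simp add: power_divide add_divide_distrib algebra_simps power2_eq_square)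
  also have "\<dots> = 4*M\<^sup>2*\<tau>\<^sup>2/(M+\<tau>\<^sup>2)"
    using pos by (simp add: power2_eq_square)
  finally show ?thesis unfolding \<tau>_def .
qed

lemma Gf_mono: assumes "M \<ge> 1" "0 \<le> \<eta>" "20*M*\<eta> < 1" "0 \<le> p" "p \<le> M"
  shows "Gf M \<eta> p \<le> Gf M \<eta> M"
proof -
  define \<tau> where "\<tau> = 1 - M*\<eta>"
  define la where "la = 2*\<tau>\<^sup>2/(M+\<tau>\<^sup>2)"
  define \<mu> where "\<mu> = 1 - la"
  have t0: "0 < \<tau>" "\<tau> \<le> 1" "M*\<eta> \<le> 1/20" using assms unfolding \<tau>_def by (auto simp: mult_nonneg_nonneg)
  have pos: "M + \<tau>\<^sup>2 > 0" using assms by (simp add: add_pos_nonneg)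
  have "\<tau>\<^sup>2 \<le> 1" using t0 by (simp add: power_le_one)
  hence mu0: "0 \<le> \<mu>" "\<mu> \<le> 1" unfolding \<mu>_def la_def using pos assms
    by (auto simp: field_simps)
  define L where "L = \<mu>*(2*\<tau>+\<mu>) - 2*M*\<tau>*\<mu>*\<eta>"
  define Q where "Q = M*\<mu>\<^sup>2*\<eta>\<^sup>2 - 2*\<mu>\<^sup>2*\<eta> + la\<^sup>2"
  have gp: "Gf M \<eta> q = M*(\<tau>-\<mu>*q*\<eta>)\<^sup>2 + q*((\<tau>-\<mu>*q*\<eta>+\<mu>)\<^sup>2 - (\<tau>-\<mu>*q*\<eta>)\<^sup>2) + la\<^sup>2*q\<^sup>2" for q
    unfolding Gf_def Let_def \<tau>_def la_def \<mu>_def by (rule refl)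
  have eq: "Gf M \<eta> M - Gf M \<eta> p = (M - p) * (L + Q*(M+p))"
    unfolding gp L_def Q_def by (rule poly_id)
  have q1: "Q*(M+p) \<ge> -2*(\<mu>*\<mu>)*\<eta>*(M+p)"
    unfolding Q_def power2_eq_square using assms by (intro mult_right_mono) (auto simp: mult_nonneg_nonneg)
  have q2: "(2*(\<mu>*\<mu>)*\<eta>)*(M+p) \<le> (2*(\<mu>*\<mu>)*\<eta>)*(2*M)"
    using assms by (intro mult_left_mono) (auto simp: mult_nonneg_nonneg)
  have q3: "L = \<mu>*(2*\<tau>+\<mu>) - 2*\<tau>*\<mu>*(M*\<eta>)" unfolding L_def by (simp add: algebra_simps)
  have h1: "L + Q*(M+p) \<ge> \<mu>*(2*\<tau>+\<mu>) - 2*\<tau>*\<mu>*(M*\<eta>) - 4*\<mu>*\<mu>*(M*\<eta>)"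
    using q1 q2 q3 by (simp add: algebra_simps)
  have h2: "\<mu>*(2*\<tau>+\<mu>) - 2*\<tau>*\<mu>*(M*\<eta>) - 4*\<mu>*\<mu>*(M*\<eta>) = \<mu>*(2*\<tau>+\<mu> - 2*\<tau>*(M*\<eta>) - 4*\<mu>*(M*\<eta>))"
    by (simp add: algebra_simps)
  have h3: "\<mu>*(2*\<tau>+\<mu> - 2*\<tau>*(M*\<eta>) - 4*\<mu>*(M*\<eta>)) \<ge> 0"
  proof (rule mult_nonneg_nonneg)
    show "0 \<le> \<mu>" by fact
    have "2*\<tau>*(M*\<eta>) \<le> 2*(1/20)" using t0 mult_mono[of \<tau> 1 "M*\<eta>" "1/20"] assms
      by (simp add: mult_nonneg_nonneg)
    moreover have "4*\<mu>*(M*\<eta>) \<le> 4*(1/20)" using mu0 t0 mult_mono[of \<mu> 1 "M*\<eta>" "1/20"] assms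
      by (simp add: mult_nonneg_nonneg)
    moreover have "\<tau> \<ge> 19/20" using t0 unfolding \<tau>_def by linarith
    ultimately show "0 \<le> 2*\<tau>+\<mu> - 2*\<tau>*(M*\<eta>) - 4*\<mu>*(M*\<eta>)" using mu0 by linarith
  qed
  have "0 \<le> (M - p) * (L + Q*(M+p))" using assms h1 h2 h3 by simp
  thus ?thesis using eq by linarith
qed


lemma meas_coord[measurable]: "i < N+2 \<Longrightarrow> (\<lambda>\<theta>. \<theta> i) \<in> borel_measurable (param_space N)"
  unfolding param_space_def by simp

lemma meas_preact[measurable]: "(\<lambda>\<theta>. preact N \<theta> x) \<in> borel_measurable (param_space N)"
  unfolding preact_def by measurable

lemma meas_relu[measurable]: "relu \<in> borel_measurable borel"
  unfolding relu_def by measurable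

lemma meas_relu'[measurable]: "relu' \<in> borel_measurable borel"
  unfolding relu'_def by measurable

lemma meas_out[measurable]: "(\<lambda>\<theta>. \<theta> 0 * relu (preact N \<theta> x)) \<in> borel_measurable (param_space N)"
  by measurable

lemma meas_grad[measurable]: "n < N \<Longrightarrow> (\<lambda>\<theta>. \<theta> 0 * relu' (preact N \<theta> x) * \<theta> (Suc n)) \<in> borel_measurable (param_space N)"
  by measurable

lemma meas_sph[measurable]: "{\<theta> \<in> space (param_space N). (\<Sum>i<N + 2. (\<theta> i)\<^sup>2) = 1} \<in> sets (param_space N)"
  by measurable

definition Uf :: "nat \<Rightarrow> nat \<Rightarrow> (nat \<Rightarrow> real) \<Rightarrow> nat \<Rightarrow> real" where
  "Uf dt m u n = (if n < m*dt then u (n mod dt) else 0)"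

definition nrn :: "nat \<Rightarrow> (nat \<Rightarrow> real) \<Rightarrow> real \<Rightarrow> real \<Rightarrow> real \<Rightarrow> nat \<Rightarrow> real" where
  "nrn N U w al b = restrict (\<lambda>i. if i = 0 then w else if i = Suc N then b else al * U (i - 1)) {..<N+2}"

definition nustar :: "nat \<Rightarrow> (nat \<Rightarrow> real) \<Rightarrow> real \<Rightarrow> real \<Rightarrow> real \<Rightarrow> (nat \<Rightarrow> real) measure" where
  "nustar N U w al b = distr (measure_pmf (bernoulli_pmf (1/2))) (param_space N)
      (\<lambda>c. if c then nrn N U w al b else nrn N U (-w) (-al) b)"

lemma nrn_space: "nrn N U w al b \<in> space (param_space N)"
  unfolding nrn_def param_space_def by (simp add: space_PiM)

lemma nrn_meas: "(\<lambda>c. if c then nrn N U w al b else nrn N U (-w) (-al) b) \<in> measurable (measure_pmf (bernoulli_pmf (1/2))) (param_space N)"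
  using nrn_space by auto

lemma nustar_integral:
  fixes g :: "(nat \<Rightarrow> real) \<Rightarrow> real"
  assumes g: "g \<in> borel_measurable (param_space N)"
  shows "integral\<^sup>L (nustar N U w al b) g = (g (nrn N U w al b) + g (nrn N U (-w) (-al) b)) / 2"
proof -
  have "integral\<^sup>L (nustar N U w al b) g = integral\<^sup>L (measure_pmf (bernoulli_pmf (1/2))) (\<lambda>c. g (if c then nrn N U w al b else nrn N U (-w) (-al) b))"
    unfolding nustar_def by (intro integral_distr nrn_meas g)
  also have "\<dots> = (\<Sum>c\<in>UNIV. pmf (bernoulli_pmf (1/2)) c *\<^sub>R g (if c then nrn N U w al b else nrn N U (-w) (-al) b))"
    by (rule integral_measure_pmf) auto
  also have "\<dots> = (g (nrn N U w al b) + g (nrn N U (-w) (-al) b)) / 2"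
    by (simp add: UNIV_bool)
  finally show ?thesis .
qed

lemma nrn_simps:
  "nrn N U w al b 0 = w" "nrn N U w al b (Suc N) = b" "n < N \<Longrightarrow> nrn N U w al b (Suc n) = al * U n"
  unfolding nrn_def by auto

lemma sum_N2: "(\<Sum>i<N+2. f i) = f 0 + (\<Sum>n<N. f (Suc n)) + f (Suc N)"
proof -
  have "(\<Sum>i<N+2. f i) = (\<Sum>i<Suc N. f i) + f (Suc N)" by simp
  also have "(\<Sum>i<Suc N. f i) = f 0 + (\<Sum>n<N. f (Suc n))" by (rule sum.lessThan_Suc_shift)
  finally show ?thesis .
qed

lemma nustar_networks:
  assumes "w\<^sup>2 + al\<^sup>2 * (\<Sum>n<N. (U n)\<^sup>2) + b\<^sup>2 = 1"
  shows "nustar N U w al b \<in> networks N"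
proof -
  have sq: "(\<Sum>i<N + 2. (nrn N U w al b i)\<^sup>2) = w\<^sup>2 + al\<^sup>2 * (\<Sum>n<N. (U n)\<^sup>2) + b\<^sup>2" for w al
  proof -
    have "(\<Sum>n<N. (nrn N U w al b (Suc n))\<^sup>2) = (\<Sum>n<N. al\<^sup>2 * (U n)\<^sup>2)"
      by (rule sum.cong) (auto simp: nrn_simps power_mult_distrib)
    thus ?thesis unfolding sum_N2 by (simp add: nrn_simps sum_distrib_left)
  qed
  have sph: "(\<Sum>i<N + 2. (nrn N U w al b i)\<^sup>2) = 1" "(\<Sum>i<N + 2. (nrn N U (-w) (-al) b i)\<^sup>2) = 1"
    using assms unfolding sq by simp_all
  show ?thesis
    unfolding networks_def
  proof (intro CollectI conjI)
    show "sets (nustar N U w al b) = sets (param_space N)" unfolding nustar_def by simp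
    show "prob_space (nustar N U w al b)" unfolding nustar_def
      by (rule prob_space.prob_space_distr[OF measure_pmf.prob_space_axioms nrn_meas])
    show "AE \<theta> in nustar N U w al b. (\<Sum>i<N + 2. (\<theta> i)\<^sup>2) = 1"
    proof -
      have "\<forall>c. (\<Sum>i<N + 2. ((if c then nrn N U w al b else nrn N U (-w) (-al) b) i)\<^sup>2) = 1"
        using sph by simp
      hence "AE c in measure_pmf (bernoulli_pmf (1/2)). (\<Sum>i<N + 2. ((if c then nrn N U w al b else nrn N U (-w) (-al) b) i)\<^sup>2) = 1"
        by (intro AE_I2) blast
      thus ?thesis unfolding nustar_def by (subst AE_distr_iff[OF nrn_meas meas_sph])
    qed
  qed
qed


lemma sum_add_split: "(\<Sum>n<a+c. f n) = (\<Sum>n<a. f n) + (\<Sum>k<c. f (a+k))" for f :: "nat \<Rightarrow> real"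
  by (induction c) (simp_all add: add.assoc)

lemma sum_blocks: "(\<Sum>n<m*dt. f n) = (\<Sum>i<m. \<Sum>k<dt. f (i*dt+k))" for f :: "nat \<Rightarrow> real"
proof (induction m)
  case (Suc m)
  have "(\<Sum>n<Suc m*dt. f n) = (\<Sum>n<m*dt + dt. f n)" by (simp add: add.commute)
  also have "\<dots> = (\<Sum>n<m*dt. f n) + (\<Sum>k<dt. f (m*dt+k))" by (rule sum_add_split)
  finally show ?case using Suc by simp
qed simp

lemma sum_trunc: "K \<le> N \<Longrightarrow> (\<And>n. K \<le> n \<Longrightarrow> n < N \<Longrightarrow> f n = 0) \<Longrightarrow> (\<Sum>n<N. f n) = (\<Sum>n<K. f n)"
  for f :: "nat \<Rightarrow> real"
  by (rule sum.mono_neutral_right) auto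

lemma cs_abs: "\<bar>\<Sum>k<dt. u k * g k\<bar> \<le> sqrt (\<Sum>k<dt. (u k)\<^sup>2) * sqrt (\<Sum>k<dt. (g k)\<^sup>2)"
  for u g :: "nat \<Rightarrow> real"
proof -
  have "\<bar>\<Sum>k<dt. u k * g k\<bar> = sqrt ((\<Sum>k<dt. u k * g k)\<^sup>2)" by simp
  also have "\<dots> \<le> sqrt ((\<Sum>k<dt. (u k)\<^sup>2) * (\<Sum>k<dt. (g k)\<^sup>2))"
    by (intro real_sqrt_le_mono Cauchy_Schwarz_ineq_sum)
  finally show ?thesis by (simp add: real_sqrt_mult)
qed

lemma support_T:
  fixes d dt m :: nat and u x :: "nat \<Rightarrow> real" and y \<eta> :: real
  assumes dm: "d = 2*m" and dt: "dt \<ge> 1" and un: "sqrt (\<Sum>k<dt. (u k)\<^sup>2) = 1" and e0: "0 \<le> \<eta>"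
    and xy: "(x, y) \<in> data_support d dt u \<eta>"
  shows "y = 1 \<or> y = -1" "y * (\<Sum>n<m*dt. u (n mod dt) * x n) \<ge> 1 - m*\<eta>"
proof -
  from xy obtain j g where y: "y = 1 \<or> y = -1" and j: "j \<in> {1..d div 2}"
    and gn: "\<forall>i\<in>{1..d}. sqrt (\<Sum>k<dt. (g i k)\<^sup>2) \<le> 1"
    and xf: "\<forall>i\<in>{1..d}. \<forall>k<dt. x ((i - 1) * dt + k) = (if i = j then y * u k else 0) + \<eta> * g i k"
    unfolding data_support_def by blast
  show "y = 1 \<or> y = -1" by fact
  have y2: "y*y = 1" using y by auto
  define c where "c i = (\<Sum>k<dt. u k * g (Suc i) k)" for i
  have c1: "\<bar>c i\<bar> \<le> 1" if "i < m" for i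
  proof -
    have "\<bar>c i\<bar> \<le> sqrt (\<Sum>k<dt. (u k)\<^sup>2) * sqrt (\<Sum>k<dt. (g (Suc i) k)\<^sup>2)" unfolding c_def by (rule cs_abs)
    also have "\<dots> \<le> 1" using gn that dm un by auto
    finally show ?thesis .
  qed
  have xi: "x (i*dt+k) = (if Suc i = j then y * u k else 0) + \<eta> * g (Suc i) k" if "i < m" "k < dt" for i k
    using xf[rule_format, of "Suc i" k] that dm by auto
  have "(\<Sum>n<m*dt. u (n mod dt) * x n) = (\<Sum>i<m. \<Sum>k<dt. u k * x (i*dt+k))"
    unfolding sum_blocks using dt by simp
  also have "\<dots> = (\<Sum>i<m. (if Suc i = j then y * (\<Sum>k<dt. (u k)\<^sup>2) else 0) + \<eta> * c i)"
  proof (intro sum.cong refl)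
    fix i assume i: "i \<in> {..<m}"
    have "(\<Sum>k<dt. u k * x (i*dt+k)) = (\<Sum>k<dt. (if Suc i = j then y*(u k)\<^sup>2 else 0) + \<eta>*(u k * g (Suc i) k))"
    proof (intro sum.cong refl)
      fix k assume "k \<in> {..<dt}"
      then show "u k * x (i*dt+k) = (if Suc i = j then y*(u k)\<^sup>2 else 0) + \<eta>*(u k * g (Suc i) k)"
        using xi[of i k] i by (simp add: power2_eq_square algebra_simps)
    qed
    thus "(\<Sum>k<dt. u k * x (i*dt+k)) = (if Suc i = j then y * (\<Sum>k<dt. (u k)\<^sup>2) else 0) + \<eta> * c i"
      by (cases "Suc i = j") (simp_all add: sum.distrib sum_distrib_left c_def)
  qed
  also have "\<dots> = (\<Sum>i<m. (if i = j - 1 then y else 0)) + \<eta> * (\<Sum>i<m. c i)"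
  proof -
    have "(\<Sum>k<dt. (u k)\<^sup>2) = 1" using un by simp
    moreover have "(Suc i = j) = (i = j - 1)" for i using j by auto
    ultimately show ?thesis by (simp add: sum.distrib sum_distrib_left)
  qed
  also have "(\<Sum>i<m. (if i = j - 1 then y else 0)) = y" using j dm by (subst sum.delta) auto
  finally have T: "(\<Sum>n<m*dt. u (n mod dt) * x n) = y + \<eta> * (\<Sum>i<m. c i)" .
  have "\<bar>\<Sum>i<m. c i\<bar> \<le> (\<Sum>i<m. 1)" using c1 by (intro order_trans[OF sum_abs] sum_mono) auto
  hence "\<bar>y * (\<eta> * (\<Sum>i<m. c i))\<bar> \<le> m * \<eta>" using y e0 by (auto simp: abs_mult mult.commute mult_left_mono)
  hence "y * (\<eta> * (\<Sum>i<m. c i)) \<ge> - (m*\<eta>)" by linarith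
  thus "y * (\<Sum>n<m*dt. u (n mod dt) * x n) \<ge> 1 - m*\<eta>" unfolding T using y2 by (simp add: algebra_simps)
qed


definition xp :: "nat \<Rightarrow> nat \<Rightarrow> (nat \<Rightarrow> real) \<Rightarrow> real \<Rightarrow> nat \<Rightarrow> real \<Rightarrow> nat \<Rightarrow> real" where
  "xp dt m u \<eta> j y n = (if n < m*dt then y*((if n div dt = j then 1 else 0) - \<eta>) * u (n mod dt) else 0)"

definition ablk :: "nat \<Rightarrow> (nat \<Rightarrow> real) \<Rightarrow> (nat \<Rightarrow> real) \<Rightarrow> nat \<Rightarrow> real" where
  "ablk dt u \<theta> i = (\<Sum>k<dt. \<theta> (Suc (i*dt+k)) * u k)"

lemma xp_support:
  assumes dm: "d = 2*m" and dt: "dt \<ge> 1" and un: "sqrt (\<Sum>k<dt. (u k)\<^sup>2) = 1" and j: "j < m"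
    and y: "y = 1 \<or> y = -1"
  shows "(xp dt m u \<eta> j y, y) \<in> data_support d dt u \<eta>"
proof -
  define g where "g i k = (if i \<le> m then -y * u k else 0)" for i k
  have y2: "y*y = 1" using y by auto
  have gn: "\<forall>i\<in>{1..d}. sqrt (\<Sum>k<dt. (g i k)\<^sup>2) \<le> 1"
  proof
    fix i assume "i \<in> {1..d}"
    show "sqrt (\<Sum>k<dt. (g i k)\<^sup>2) \<le> 1"
    proof (cases "i \<le> m")
      case True
      have "(\<Sum>k<dt. (g i k)\<^sup>2) = (\<Sum>k<dt. (u k)\<^sup>2)"
        using True y2 by (intro sum.cong refl) (simp add: g_def power2_eq_square algebra_simps)
      thus ?thesis using un by simp
    qed (simp add: g_def)
  qed
  have xv: "\<forall>i\<in>{1..d}. \<forall>k<dt. xp dt m u \<eta> j y ((i - 1) * dt + k) = (if i = Suc j then y * u k else 0) + \<eta> * g i k"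
  proof (intro ballI allI impI)
    fix i k assume i: "i \<in> {1..d}" and k: "k < dt"
    have dv: "((i - 1) * dt + k) div dt = i - 1" and md: "((i - 1) * dt + k) mod dt = k" using k by auto
    have lt: "((i - 1) * dt + k < m*dt) = (i \<le> m)"
    proof
      assume "(i - 1) * dt + k < m*dt"
      hence "(i - 1) * dt < m * dt" by linarith
      hence "i - 1 < m" by (simp add: mult_less_cancel2)
      thus "i \<le> m" using i by auto
    next
      assume "i \<le> m"
      hence "(i - 1) + 1 \<le> m" using i by auto
      hence "((i - 1) + 1) * dt \<le> m * dt" by (rule mult_right_mono) simp
      thus "(i - 1) * dt + k < m*dt" using k by (simp add: algebra_simps)
    qed
    show "xp dt m u \<eta> j y ((i - 1) * dt + k) = (if i = Suc j then y * u k else 0) + \<eta> * g i k"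
      unfolding xp_def dv md lt g_def using i j by (auto simp: algebra_simps)
  qed
  have x0: "\<forall>n\<ge>dt * d. xp dt m u \<eta> j y n = 0"
  proof (intro allI impI)
    fix n assume "n \<ge> dt*d"
    moreover have "m*dt \<le> dt*d" using dm by simp
    ultimately have "\<not> n < m*dt" by linarith
    thus "xp dt m u \<eta> j y n = 0" unfolding xp_def by auto
  qed
  have jr: "Suc j \<in> {1..d div 2}" using j dm by auto
  show ?thesis unfolding data_support_def using y gn xv x0 jr by blast
qed

lemma preact_xp:
  assumes dm: "d = 2*m" and dt: "dt \<ge> 1" and j: "j < m"
  shows "preact (dt*d) \<theta> (xp dt m u \<eta> j y) = y * (ablk dt u \<theta> j - \<eta> * (\<Sum>i<m. ablk dt u \<theta> i)) + \<theta> (Suc (dt*d))"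
proof -
  have "(\<Sum>n<dt*d. \<theta> (Suc n) * xp dt m u \<eta> j y n) = (\<Sum>n<m*dt. \<theta> (Suc n) * xp dt m u \<eta> j y n)"
    using dm by (intro sum_trunc) (auto simp: xp_def)
  also have "\<dots> = (\<Sum>i<m. \<Sum>k<dt. \<theta> (Suc (i*dt+k)) * xp dt m u \<eta> j y (i*dt+k))" by (rule sum_blocks)
  also have "\<dots> = (\<Sum>i<m. y * ((if i = j then 1 else 0) - \<eta>) * ablk dt u \<theta> i)"
  proof (intro sum.cong refl)
    fix i assume i: "i \<in> {..<m}"
    have "(\<Sum>k<dt. \<theta> (Suc (i*dt+k)) * xp dt m u \<eta> j y (i*dt+k)) = (\<Sum>k<dt. y * ((if i = j then 1 else 0) - \<eta>) * (\<theta> (Suc (i*dt+k)) * u k))"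
    proof (intro sum.cong refl)
      fix k assume k: "k \<in> {..<dt}"
      have lt: "i*dt + k < m*dt"
      proof -
        have "(i+1)*dt \<le> m*dt" using i by (intro mult_right_mono) auto
        thus ?thesis using k by (simp add: algebra_simps)
      qed
      have "(i*dt+k) div dt = i" "(i*dt+k) mod dt = k" using k by auto
      thus "\<theta> (Suc (i*dt+k)) * xp dt m u \<eta> j y (i*dt+k) = y * ((if i = j then 1 else 0) - \<eta>) * (\<theta> (Suc (i*dt+k)) * u k)"
        unfolding xp_def using lt by (simp add: algebra_simps)
    qed
    thus "(\<Sum>k<dt. \<theta> (Suc (i*dt+k)) * xp dt m u \<eta> j y (i*dt+k)) = y * ((if i = j then 1 else 0) - \<eta>) * ablk dt u \<theta> i"
      unfolding ablk_def by (simp add: sum_distrib_left)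
  qed
  also have "\<dots> = y * (ablk dt u \<theta> j - \<eta> * (\<Sum>i<m. ablk dt u \<theta> i))"
  proof -
    have "(\<Sum>i<m. y * ((if i = j then 1 else 0) - \<eta>) * ablk dt u \<theta> i) = (\<Sum>i<m. (if i = j then y * ablk dt u \<theta> i else 0) - y * \<eta> * ablk dt u \<theta> i)"
      by (intro sum.cong refl) (simp add: algebra_simps)
    also have "\<dots> = y * ablk dt u \<theta> j - y * \<eta> * (\<Sum>i<m. ablk dt u \<theta> i)"
      using j by (simp add: sum_subtractf sum_distrib_left)
    finally show ?thesis by (simp add: algebra_simps)
  qed
  finally show ?thesis unfolding preact_def by simp
qed


lemma sq_le_sum: "i \<in> A \<Longrightarrow> finite A \<Longrightarrow> (f i)\<^sup>2 \<le> (\<Sum>j\<in>A. (f j)\<^sup>2)" for f :: "nat \<Rightarrow> real"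
  by (rule member_le_sum) auto

lemma coord_le1: "(\<Sum>i<N+2. (\<theta> i)\<^sup>2) = 1 \<Longrightarrow> i < N+2 \<Longrightarrow> \<bar>\<theta> i\<bar> \<le> (1::real)"
  for \<theta> :: "nat \<Rightarrow> real" and N i :: nat
  using sq_le_sum[of i "{..<N+2}" \<theta>] abs_square_le_1 by auto

lemma out_bound:
  assumes sph: "(\<Sum>i<N+2. (\<theta> i)\<^sup>2) = 1" and xb: "\<forall>n<N. \<bar>x n\<bar> \<le> C" and C0: "0 \<le> C"
  shows "\<bar>\<theta> 0 * relu (preact N \<theta> x)\<bar> \<le> N*C + 1"
proof -
  have t1: "\<bar>\<theta> i\<bar> \<le> 1" if "i < N+2" for i using coord_le1[OF sph that] .
  have "\<bar>preact N \<theta> x\<bar> \<le> (\<Sum>n<N. \<bar>\<theta> (Suc n) * x n\<bar>) + \<bar>\<theta> (Suc N)\<bar>"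
    unfolding preact_def by (rule order_trans[OF abs_triangle_ineq add_right_mono[OF sum_abs]])
  also have "\<dots> \<le> (\<Sum>n<N. C) + 1"
  proof (intro add_mono sum_mono)
    fix n assume "n \<in> {..<N}"
    hence "\<bar>\<theta> (Suc n)\<bar> \<le> 1" "\<bar>x n\<bar> \<le> C" using t1 xb by auto
    thus "\<bar>\<theta> (Suc n) * x n\<bar> \<le> C" by (simp add: abs_mult mult_le_one mult_mono' order_trans[OF mult_right_mono] )
  qed (use t1 in auto)
  finally have pb: "\<bar>preact N \<theta> x\<bar> \<le> N*C + 1" by simp
  have "\<bar>relu (preact N \<theta> x)\<bar> \<le> \<bar>preact N \<theta> x\<bar>" unfolding relu_def by auto
  hence "\<bar>relu (preact N \<theta> x)\<bar> \<le> N*C + 1" using pb by linarith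
  moreover have "\<bar>\<theta> 0\<bar> \<le> 1" using t1 by auto
  ultimately have "\<bar>\<theta> 0\<bar> * \<bar>relu (preact N \<theta> x)\<bar> \<le> 1 * (N*C+1)"
    by (intro mult_mono) auto
  thus ?thesis by (simp add: abs_mult)
qed

lemma net_int:
  assumes mu: "\<mu> \<in> networks N" and xb: "\<forall>n<N. \<bar>x n\<bar> \<le> C" and C0: "0 \<le> C"
  shows "integrable \<mu> (\<lambda>\<theta>. \<theta> 0 * relu (preact N \<theta> x))" "\<bar>net_out N \<mu> x\<bar> \<le> N*C + 1"
proof -
  have ps: "prob_space \<mu>" and se: "sets \<mu> = sets (param_space N)"
    and ae: "AE \<theta> in \<mu>. (\<Sum>i<N + 2. (\<theta> i)\<^sup>2) = 1" using mu unfolding networks_def by auto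
  interpret prob_space \<mu> by (rule ps)
  have meas: "(\<lambda>\<theta>. \<theta> 0 * relu (preact N \<theta> x)) \<in> borel_measurable \<mu>"
    using meas_out[of N x] by (subst measurable_cong_sets[OF se refl])
  have aeb: "AE \<theta> in \<mu>. \<bar>\<theta> 0 * relu (preact N \<theta> x)\<bar> \<le> N*C + 1"
    using ae by eventually_elim (rule out_bound[OF _ xb C0])
  show int: "integrable \<mu> (\<lambda>\<theta>. \<theta> 0 * relu (preact N \<theta> x))"
    using aeb meas by (intro integrable_const_bound[where B="N*C+1"]) auto
  have "net_out N \<mu> x \<le> (\<integral>\<theta>. N*C + 1 \<partial>\<mu>)" unfolding net_out_def
    using aeb by (intro integral_mono_AE int) auto
  moreover have "(\<integral>\<theta>. -(N*C + 1) \<partial>\<mu>) \<le> net_out N \<mu> x" unfolding net_out_def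
    using aeb by (intro integral_mono_AE int) auto
  ultimately show "\<bar>net_out N \<mu> x\<bar> \<le> N*C + 1" by (simp add: prob_space)
qed

lemma support_bound:
  assumes dt: "dt \<ge> 1" and un: "sqrt (\<Sum>k<dt. (u k)\<^sup>2) = 1" and e0: "0 \<le> \<eta>" "\<eta> \<le> 1"
    and xy: "(x, y) \<in> data_support d dt u \<eta>"
  shows "\<forall>n<dt*d. \<bar>x n\<bar> \<le> 2"
proof (intro allI impI)
  fix n assume n: "n < dt*d"
  from xy obtain j g where y: "y = 1 \<or> y = -1"
    and gn: "\<forall>i\<in>{1..d}. sqrt (\<Sum>k<dt. (g i k)\<^sup>2) \<le> 1"
    and xf: "\<forall>i\<in>{1..d}. \<forall>k<dt. x ((i - 1) * dt + k) = (if i = j then y * u k else 0) + \<eta> * g i k"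
    unfolding data_support_def by blast
  define i where "i = Suc (n div dt)"
  define k where "k = n mod dt"
  have k: "k < dt" unfolding k_def using dt by auto
  have "n div dt < d" using n dt by (simp add: div_less_iff_less_mult mult.commute)
  hence i: "i \<in> {1..d}" unfolding i_def by auto
  have nn: "(i - 1) * dt + k = n" unfolding i_def k_def by simp
  have xn: "x n = (if i = j then y * u k else 0) + \<eta> * g i k" using xf i k nn by metis
  have "(u k)\<^sup>2 \<le> (\<Sum>k<dt. (u k)\<^sup>2)" using k by (intro sq_le_sum) auto
  hence u1: "\<bar>u k\<bar> \<le> 1" using un abs_square_le_1 by (metis real_sqrt_eq_1_iff)
  have "(g i k)\<^sup>2 \<le> (\<Sum>k<dt. (g i k)\<^sup>2)" using k by (intro sq_le_sum) auto
  moreover have "(\<Sum>k<dt. (g i k)\<^sup>2) \<le> 1" using gn i by (metis real_sqrt_le_1_iff)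
  ultimately have g1: "\<bar>g i k\<bar> \<le> 1" using abs_square_le_1 by (metis order_trans)
  have "\<bar>\<eta> * g i k\<bar> \<le> 1" using g1 e0 by (simp add: abs_mult mult_le_one)
  moreover have "\<bar>if i = j then y * u k else 0\<bar> \<le> 1" using y u1 by auto
  ultimately show "\<bar>x n\<bar> \<le> 2" unfolding xn by linarith
qed


definition hh :: "real \<Rightarrow> real \<Rightarrow> real" where
  "hh s b = relu (s + b) - relu (b - s)"

lemma hh_odd: "hh (-s) b = - hh s b"
  unfolding hh_def by (simp add: algebra_simps)

lemma hh_pos_bound: assumes b0: "0 \<le> b" and l0: "0 \<le> la" and l1: "la \<le> 1"
  shows "hh s b \<le> s + (if s > 0 then 1 else 0) * (la*b + (1-la) * s)"
proof (cases "s > 0")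
  case True
  show ?thesis
  proof (cases "s \<le> b")
    case True
    have "la * s \<le> la * b" using True l0 by (simp add: mult_left_mono)
    thus ?thesis using True \<open>s > 0\<close> b0 unfolding hh_def relu_def by (simp add: algebra_simps)
  next
    case False
    have "(1-la) * b \<le> (1-la) * s" using False l1 by (intro mult_left_mono) auto
    thus ?thesis using False \<open>s > 0\<close> b0 unfolding hh_def relu_def by (simp add: algebra_simps)
  qed
next
  case False
  thus ?thesis using b0 unfolding hh_def relu_def by (auto simp: max_def)
qed

lemma hh_neg_bound: "b < 0 \<Longrightarrow> hh s b \<le> \<bar>s\<bar>"
  unfolding hh_def relu_def by (auto simp: max_def)

lemma cs2:
  fixes U V E F Ra B :: real
  assumes a1: "U\<^sup>2 \<le> E*Ra" and a2: "V\<^sup>2 \<le> F*B" and a3: "0 \<le> E" "0 \<le> F" "0 \<le> Ra" "0 \<le> B"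
  shows "(U+V)\<^sup>2 \<le> (E+F)*(Ra+B)"
proof -
  have m1: "U\<^sup>2*V\<^sup>2 \<le> (E*Ra)*(F*B)"
    by (rule mult_mono[OF a1 a2]) (use a3 in auto)
  have m2: "4*(E*Ra)*(F*B) \<le> (E*B + F*Ra)\<^sup>2"
    using sum_squares_ge_zero[of "E*B - F*Ra" 0] by (simp add: power2_eq_square algebra_simps)
  have sq: "(2*U*V)\<^sup>2 \<le> (E*B + F*Ra)\<^sup>2"
    using m1 m2 by (simp add: power2_eq_square algebra_simps)
  have nn: "0 \<le> E*B + F*Ra" using a3 by simp
  have c: "2*U*V \<le> E*B + F*Ra" by (rule power2_le_imp_le[OF sq nn])
  have "(U+V)\<^sup>2 = U\<^sup>2 + V\<^sup>2 + 2*U*V" by (simp add: power2_eq_square algebra_simps)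
  moreover have "(E+F)*(Ra+B) = E*Ra + F*B + (E*B+F*Ra)" by (simp add: algebra_simps)
  ultimately show ?thesis using a1 a2 c by linarith
qed

lemma sqrt_bound_from:
  fixes S X G R2 :: real
  assumes "S \<le> X" "0 \<le> X" "X\<^sup>2 \<le> G*R2" "0 \<le> G" "0 \<le> R2"
  shows "S \<le> sqrt G * sqrt R2"
proof -
  have "X = sqrt (X\<^sup>2)" using assms by simp
  also have "\<dots> \<le> sqrt (G*R2)" using assms by (intro real_sqrt_le_mono)
  finally show ?thesis using assms by (simp add: real_sqrt_mult)
qed

lemma sum_ind_bounds:
  fixes P :: "nat \<Rightarrow> bool"
  shows "0 \<le> (\<Sum>j<m. (if P j then 1 else 0::real))" "(\<Sum>j<m. (if P j then 1 else 0::real)) \<le> real m"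
proof -
  show "0 \<le> (\<Sum>j<m. (if P j then 1 else 0::real))" by (intro sum_nonneg) auto
  have "(\<Sum>j<m. (if P j then 1 else 0::real)) \<le> (\<Sum>j<m. 1)" by (intro sum_mono) auto
  thus "(\<Sum>j<m. (if P j then 1 else 0::real)) \<le> real m" by simp
qed

lemma sum_bound:
  fixes m :: nat and \<eta> b :: real and a :: "nat \<Rightarrow> real"
  assumes m1: "m \<ge> 1" and e0: "0 \<le> \<eta>" and e1: "20*m*\<eta> < 1"
  shows "(\<Sum>j<m. hh (a j - \<eta>*(\<Sum>i<m. a i)) b) \<le> sqrt (Gf m \<eta> m) * sqrt ((\<Sum>i<m. (a i)\<^sup>2) + b\<^sup>2)"
proof -
  define A where "A = (\<Sum>i<m. a i)"
  define s where "s j = a j - \<eta>*A" for j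
  define R2 where "R2 = (\<Sum>i<m. (a i)\<^sup>2) + b\<^sup>2"
  define G where "G = Gf m \<eta> m"
  define S where "S = (\<Sum>j<m. hh (s j) b)"
  define \<tau> where "\<tau> = 1 - m*\<eta>"
  have t0: "0 < \<tau>" "\<tau> \<le> 1" "m*\<eta> \<le> 1/20" "\<tau> \<ge> 19/20" using assms unfolding \<tau>_def by (auto simp: mult_nonneg_nonneg)
  have pos: "m + \<tau>\<^sup>2 > 0" using assms by (simp add: add_pos_nonneg)
  have GM: "G = 4*(real m)\<^sup>2*\<tau>\<^sup>2/(m+\<tau>\<^sup>2)" unfolding G_def \<tau>_def using Gf_M[of "real m" \<eta>] assms by simp
  have G0: "0 \<le> G" unfolding GM using pos by simp
  have R0: "0 \<le> R2" unfolding R2_def by (intro add_nonneg_nonneg sum_nonneg) auto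
  have sa: "(\<Sum>i<m. (a i)\<^sup>2) \<le> R2" unfolding R2_def by simp
  have "\<exists>X. S \<le> X \<and> 0 \<le> X \<and> X\<^sup>2 \<le> G*R2"
  proof (cases "b \<ge> 0")
    case True
    define la where "la = 2*\<tau>\<^sup>2/(m+\<tau>\<^sup>2)"
    define \<mu> where "\<mu> = 1 - la"
    have "\<tau>\<^sup>2 \<le> 1" using t0 by (simp add: power_le_one)
    hence la0: "0 \<le> la" "la \<le> 1" unfolding la_def using pos assms
      by (auto simp: field_simps)
    define ind where "ind j = (if s j > 0 then 1 else 0::real)" for j
    define p where "p = (\<Sum>j<m. ind j)"
    have p0: "0 \<le> p" "p \<le> m" unfolding p_def ind_def using sum_ind_bounds by auto
    define c2 where "c2 = \<tau> - \<mu>*p*\<eta>"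
    define e where "e j = c2 + \<mu>*ind j" for j
    have "\<mu>*p \<le> 1*real m" using la0 p0 unfolding \<mu>_def by (intro mult_mono) auto
    hence "\<mu>*p*\<eta> \<le> 1*real m*\<eta>" using e0 by (intro mult_right_mono)
    hence c20: "0 \<le> c2" unfolding c2_def using t0 unfolding \<tau>_def by linarith
    have e0': "0 \<le> e j" for j unfolding e_def ind_def using c20 la0 \<mu>_def by auto
    have st1: "S \<le> (\<Sum>j<m. s j + ind j * (la*b + \<mu> * s j))"
      unfolding S_def ind_def \<mu>_def by (intro sum_mono hh_pos_bound) (use True la0 in auto)
    have st2: "(\<Sum>j<m. s j + ind j * (la*b + \<mu> * s j)) = (\<Sum>j<m. e j * a j) + la*p*b"
    proof -
      have "(\<Sum>j<m. s j + ind j * (la*b + \<mu> * s j)) = (\<Sum>j<m. a j) - m*\<eta>*A + la*b*p + \<mu>*(\<Sum>j<m. ind j * a j) - \<mu>*\<eta>*A*p"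
        unfolding s_def p_def by (simp add: sum.distrib sum_subtractf sum_distrib_left algebra_simps)
      also have "\<dots> = (\<Sum>j<m. e j * a j) + la*p*b"
        unfolding e_def c2_def \<tau>_def A_def by (simp add: sum.distrib sum_subtractf sum_distrib_left algebra_simps)
      finally show ?thesis .
    qed
    have st3: "(\<Sum>j<m. e j * a j) \<le> (\<Sum>j<m. e j * \<bar>a j\<bar>)"
      using e0' by (intro sum_mono mult_left_mono) auto
    define U where "U = (\<Sum>j<m. e j * \<bar>a j\<bar>)"
    define V where "V = la*p*b"
    have U0: "0 \<le> U" unfolding U_def using e0' by (intro sum_nonneg) auto
    have V0: "0 \<le> V" unfolding V_def using la0 p0 True by auto
    have cs: "U\<^sup>2 \<le> (\<Sum>j<m. (e j)\<^sup>2) * (\<Sum>j<m. (a j)\<^sup>2)"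
      unfolding U_def using Cauchy_Schwarz_ineq_sum[of e "\<lambda>j. \<bar>a j\<bar>" "{..<m}"] by simp
    have se: "(\<Sum>j<m. (e j)\<^sup>2) = m*c2\<^sup>2 + p*((c2+\<mu>)\<^sup>2 - c2\<^sup>2)"
    proof -
      have "(e j)\<^sup>2 = c2\<^sup>2 + ind j * ((c2+\<mu>)\<^sup>2 - c2\<^sup>2)" for j
        unfolding e_def ind_def by auto
      thus ?thesis unfolding p_def by (simp add: sum.distrib sum_distrib_right)
    qed
    have gp: "Gf m \<eta> p = m*c2\<^sup>2 + p*((c2+\<mu>)\<^sup>2 - c2\<^sup>2) + la\<^sup>2*p\<^sup>2"
      unfolding Gf_def Let_def c2_def \<mu>_def la_def \<tau>_def by (simp add: mult.assoc)
    have "(U+V)\<^sup>2 \<le> ((\<Sum>j<m. (e j)\<^sup>2) + la\<^sup>2*p\<^sup>2) * ((\<Sum>j<m. (a j)\<^sup>2) + b\<^sup>2)"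
      by (rule cs2[OF cs]) (auto simp: V_def power_mult_distrib intro!: sum_nonneg)
    also have "\<dots> = Gf m \<eta> p * R2" unfolding gp se R2_def by simp
    also have "\<dots> \<le> G * R2" unfolding G_def using R0 p0 assms
      by (intro mult_right_mono Gf_mono) auto
    finally have X2: "(U+V)\<^sup>2 \<le> G * R2" .
    have "S \<le> U + V" using st1 st2 st3 unfolding U_def V_def by linarith
    thus ?thesis using X2 U0 V0 by (intro exI[of _ "U+V"]) auto
  next
    case False
    define X where "X = (\<Sum>j<m. (1+m*\<eta>)*\<bar>a j\<bar>)"
    have "S \<le> (\<Sum>j<m. \<bar>s j\<bar>)" unfolding S_def using False by (intro sum_mono hh_neg_bound) auto
    also have "\<dots> \<le> (\<Sum>j<m. \<bar>a j\<bar> + \<eta>*\<bar>A\<bar>)" unfolding s_def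
    proof (intro sum_mono)
      fix j show "\<bar>a j - \<eta>*A\<bar> \<le> \<bar>a j\<bar> + \<eta>*\<bar>A\<bar>"
        using abs_triangle_ineq4[of "a j" "\<eta>*A"] e0 by (simp add: abs_mult)
    qed
    also have "\<dots> = (\<Sum>j<m. \<bar>a j\<bar>) + m*\<eta>*\<bar>A\<bar>" by (simp add: sum.distrib)
    also have "\<dots> \<le> (\<Sum>j<m. \<bar>a j\<bar>) + m*\<eta>*(\<Sum>j<m. \<bar>a j\<bar>)" unfolding A_def using e0
      by (intro add_left_mono mult_left_mono sum_abs) auto
    also have "\<dots> = X" unfolding X_def by (simp add: sum.distrib sum_distrib_left algebra_simps)
    finally have SX: "S \<le> X" .
    have X0: "0 \<le> X" unfolding X_def using e0 by (intro sum_nonneg) auto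
    have "X\<^sup>2 \<le> (\<Sum>j<m. (1+m*\<eta>)\<^sup>2) * (\<Sum>j<m. \<bar>a j\<bar>\<^sup>2)"
      unfolding X_def by (rule Cauchy_Schwarz_ineq_sum)
    also have "\<dots> = (m*(1+m*\<eta>)\<^sup>2) * (\<Sum>j<m. (a j)\<^sup>2)" by simp
    also have "\<dots> \<le> G * R2"
    proof (intro mult_mono sa G0)
      have e2: "(1+m*\<eta>)\<^sup>2 \<le> (21/20)\<^sup>2" using t0 e0 by (intro power_mono) auto
      have t2: "(19/20)\<^sup>2 \<le> \<tau>\<^sup>2" using t0 by (intro power_mono) auto
      have t3: "\<tau>\<^sup>2 \<le> 1" using t0 by (simp add: power_le_one)
      have mm: "real m + \<tau>\<^sup>2 \<le> 2*real m" using t3 m1 by simp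
      have "real m*(1+m*\<eta>)\<^sup>2 \<le> real m*(21/20)\<^sup>2" using e2 by (intro mult_left_mono) auto
      hence "m*(1+m*\<eta>)\<^sup>2*(m+\<tau>\<^sup>2) \<le> m*(21/20)\<^sup>2*(2*real m)"
        using mm pos by (intro mult_mono) auto
      also have "\<dots> \<le> 4*(real m)\<^sup>2*(19/20)\<^sup>2" by (simp add: power2_eq_square)
      also have "\<dots> \<le> 4*(real m)\<^sup>2*\<tau>\<^sup>2" using t2 by (intro mult_left_mono) auto
      finally have "m*(1+m*\<eta>)\<^sup>2*(m+\<tau>\<^sup>2) \<le> 4*(real m)\<^sup>2*\<tau>\<^sup>2" .
      thus "m*(1+m*\<eta>)\<^sup>2 \<le> G" unfolding GM by (rule pos_le_divide_eq[OF pos, THEN iffD2])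
    qed (auto intro!: sum_nonneg)
    finally have X2: "X\<^sup>2 \<le> G * R2" .
    show ?thesis using SX X0 X2 by (intro exI[of _ X]) simp
  qed
  then obtain X where "S \<le> X" "0 \<le> X" "X\<^sup>2 \<le> G*R2" by blast
  hence "S \<le> sqrt G * sqrt R2" using G0 R0 by (intro sqrt_bound_from[of S X]) auto
  thus ?thesis unfolding S_def s_def A_def G_def R2_def .
qed

lemma key_ineq:
  fixes m :: nat and \<eta> w b :: real and a :: "nat \<Rightarrow> real"
  assumes m1: "m \<ge> 1" and e0: "0 \<le> \<eta>" and e1: "20*m*\<eta> < 1"
    and nrm: "w\<^sup>2 + (\<Sum>i<m. (a i)\<^sup>2) + b\<^sup>2 \<le> 1"
  shows "w * (\<Sum>j<m. hh (a j - \<eta>*(\<Sum>i<m. a i)) b) \<le> sqrt (Gf m \<eta> m) / 2"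
proof -
  define R2 where "R2 = (\<Sum>i<m. (a i)\<^sup>2) + b\<^sup>2"
  define sG where "sG = sqrt (Gf m \<eta> m)"
  have R0: "0 \<le> R2" unfolding R2_def by (intro add_nonneg_nonneg sum_nonneg) auto
  have G0: "0 \<le> Gf m \<eta> m"
  proof -
    have "Gf m \<eta> m = 4*(real m)\<^sup>2*(1-m*\<eta>)\<^sup>2/(real m+(1-m*\<eta>)\<^sup>2)"
      using Gf_M[of "real m" \<eta>] m1 e0 e1 by simp
    moreover have "0 < real m + (1-m*\<eta>)\<^sup>2" using m1 by (simp add: add_pos_nonneg)
    ultimately show ?thesis by simp
  qed
  have sG0: "0 \<le> sG" unfolding sG_def using G0 by simp
  have pos_case: "v * (\<Sum>j<m. hh (a' j - \<eta>*(\<Sum>i<m. a' i)) b) \<le> sG / 2"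
    if v0: "0 \<le> v" and vn: "v\<^sup>2 + R2 \<le> 1" and aa: "(\<Sum>i<m. (a' i)\<^sup>2) = (\<Sum>i<m. (a i)\<^sup>2)" for v a'
  proof -
    have sb: "(\<Sum>j<m. hh (a' j - \<eta>*(\<Sum>i<m. a' i)) b) \<le> sG * sqrt R2"
      using sum_bound[OF m1 e0, of a' b] e1 unfolding sG_def R2_def aa by simp
    have "v * (\<Sum>j<m. hh (a' j - \<eta>*(\<Sum>i<m. a' i)) b) \<le> v * (sG * sqrt R2)"
      using sb v0 by (rule mult_left_mono)
    also have "\<dots> = sG * (v * sqrt R2)" by simp
    also have "\<dots> \<le> sG * ((v\<^sup>2 + R2)/2)"
    proof (rule mult_left_mono[OF _ sG0])
      have "0 \<le> (v - sqrt R2)\<^sup>2" by simp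
      hence "2 * (v * sqrt R2) \<le> v\<^sup>2 + (sqrt R2)\<^sup>2" by (simp add: power2_eq_square algebra_simps)
      thus "v * sqrt R2 \<le> (v\<^sup>2 + R2)/2" using R0 by simp
    qed
    also have "\<dots> \<le> sG * (1/2)" using vn sG0 by (intro mult_left_mono) auto
    finally show ?thesis by simp
  qed
  have wn: "w\<^sup>2 + R2 \<le> 1" using nrm unfolding R2_def by simp
  show ?thesis
  proof (cases "w \<ge> 0")
    case True
    show ?thesis using pos_case[OF True wn, of a] unfolding sG_def by simp
  next
    case False
    have "(-w) * (\<Sum>j<m. hh ((\<lambda>i. - a i) j - \<eta>*(\<Sum>i<m. (\<lambda>i. - a i) i)) b) \<le> sG / 2"
      using False wn by (intro pos_case) auto
    moreover have "(\<Sum>j<m. hh ((\<lambda>i. - a i) j - \<eta>*(\<Sum>i<m. (\<lambda>i. - a i) i)) b) = - (\<Sum>j<m. hh (a j - \<eta>*(\<Sum>i<m. a i)) b)"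
    proof -
      have "hh ((\<lambda>i. - a i) j - \<eta>*(\<Sum>i<m. (\<lambda>i. - a i) i)) b = - hh (a j - \<eta>*(\<Sum>i<m. a i)) b" for j
        using hh_odd[of "a j - \<eta>*(\<Sum>i<m. a i)" b] by (simp add: sum_negf algebra_simps)
      thus ?thesis by (simp add: sum_negf)
    qed
    ultimately show ?thesis unfolding sG_def by simp
  qed
qed


lemma ablk_sq:
  assumes dm: "d = 2*m" and un: "sqrt (\<Sum>k<dt. (u k)\<^sup>2) = 1"
  shows "(\<Sum>i<m. (ablk dt u \<theta> i)\<^sup>2) \<le> (\<Sum>n<dt*d. (\<theta> (Suc n))\<^sup>2)"
proof -
  have u1: "(\<Sum>k<dt. (u k)\<^sup>2) = 1" using un by simp
  have "(\<Sum>i<m. (ablk dt u \<theta> i)\<^sup>2) \<le> (\<Sum>i<m. \<Sum>k<dt. (\<theta> (Suc (i*dt+k)))\<^sup>2)"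
  proof (intro sum_mono)
    fix i
    have "(ablk dt u \<theta> i)\<^sup>2 \<le> (\<Sum>k<dt. (\<theta> (Suc (i*dt+k)))\<^sup>2) * (\<Sum>k<dt. (u k)\<^sup>2)"
      unfolding ablk_def by (rule Cauchy_Schwarz_ineq_sum)
    thus "(ablk dt u \<theta> i)\<^sup>2 \<le> (\<Sum>k<dt. (\<theta> (Suc (i*dt+k)))\<^sup>2)" using u1 by simp
  qed
  also have "\<dots> = (\<Sum>n<m*dt. (\<theta> (Suc n))\<^sup>2)" by (rule sum_blocks[symmetric])
  also have "\<dots> \<le> (\<Sum>n<dt*d. (\<theta> (Suc n))\<^sup>2)" using dm by (intro sum_mono2) auto
  finally show ?thesis .
qed

lemma dual_bound:
  fixes d dt m :: nat and u :: "nat \<Rightarrow> real" and \<eta> :: real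
  assumes dm: "d = 2*m" and m1: "m \<ge> 1" and dt: "dt \<ge> 1" and un: "sqrt (\<Sum>k<dt. (u k)\<^sup>2) = 1"
    and e0: "0 \<le> \<eta>" and e1: "20*m*\<eta> < 1" and mu: "\<mu> \<in> networks (dt*d)"
  shows "margin d dt u \<eta> \<mu> \<le> sqrt (Gf m \<eta> m) / (4*m)"
proof -
  define N where "N = dt*d"
  define F where "F x = net_out N \<mu> x" for x
  define D where "D = data_support d dt u \<eta>"
  have e2: "\<eta> \<le> 1"
  proof -
    have "real m * \<eta> \<ge> 1 * \<eta>" using m1 e0 by (intro mult_right_mono) auto
    thus ?thesis using e1 by simp
  qed
  have xb: "\<forall>n<N. \<bar>x n\<bar> \<le> 2" if "(x,y) \<in> D" for x y
    using support_bound[OF dt un e0 e2] that unfolding N_def D_def by blast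
  have Fb: "\<bar>F x\<bar> \<le> N*2 + 1" if "(x,y) \<in> D" for x y
    unfolding F_def using net_int(2)[OF mu[folded N_def] xb[OF that]] by simp
  have Fi: "integrable \<mu> (\<lambda>\<theta>. \<theta> 0 * relu (preact N \<theta> x))" if "(x,y) \<in> D" for x y
    using net_int(1)[OF mu[folded N_def] xb[OF that]] by simp
  have ysgn: "y = 1 \<or> y = -1" if "(x,y) \<in> D" for x y using that unfolding D_def data_support_def by auto
  have bdd: "bdd_below ((\<lambda>p. snd p * F (fst p)) ` D)"
  proof (rule bdd_belowI2[where m="-(real N*2+1)"])
    fix p assume "p \<in> D"
    then obtain x y where p: "p = (x,y)" "(x,y) \<in> D" by (cases p) auto
    show "-(real N*2+1) \<le> snd p * F (fst p)" using Fb[OF p(2)] ysgn[OF p(2)] p(1) by auto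
  qed
  have mar: "margin d dt u \<eta> \<mu> = (INF p\<in>D. snd p * F (fst p))"
    unfolding margin_def D_def F_def N_def ..
  have xpD: "(xp dt m u \<eta> j y, y) \<in> D" if "j < m" "y = 1 \<or> y = -1" for j y
    unfolding D_def using xp_support[OF dm dt un that] .
  have le: "margin d dt u \<eta> \<mu> \<le> y * F (xp dt m u \<eta> j y)" if "j < m" "y = 1 \<or> y = -1" for j y
    unfolding mar using cINF_lower[OF bdd xpD[OF that]] by simp
  define g where "g j y \<theta> = \<theta> 0 * relu (preact N \<theta> (xp dt m u \<eta> j y))" for j y \<theta>
  have gi: "integrable \<mu> (g j y)" if "j < m" "y = 1 \<or> y = -1" for j y
    unfolding g_def using Fi[OF xpD[OF that]] .
  have "2*m * margin d dt u \<eta> \<mu> = (\<Sum>j<m. 2 * margin d dt u \<eta> \<mu>)" by simp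
  also have "\<dots> \<le> (\<Sum>j<m. F (xp dt m u \<eta> j 1) - F (xp dt m u \<eta> j (-1)))"
  proof (intro sum_mono)
    fix j assume "j \<in> {..<m}"
    thus "2 * margin d dt u \<eta> \<mu> \<le> F (xp dt m u \<eta> j 1) - F (xp dt m u \<eta> j (-1))"
      using le[of j 1] le[of j "-1"] by auto
  qed
  also have "\<dots> = (\<integral>\<theta>. (\<Sum>j<m. g j 1 \<theta> - g j (-1) \<theta>) \<partial>\<mu>)"
  proof -
    have "(\<integral>\<theta>. (\<Sum>j<m. g j 1 \<theta> - g j (-1) \<theta>) \<partial>\<mu>) = (\<Sum>j<m. (\<integral>\<theta>. (g j 1 \<theta> - g j (-1) \<theta>) \<partial>\<mu>))"
      using Bochner_Integration.integral_sum[where I="{..<m}" and M=\<mu> and f="\<lambda>j \<theta>. g j 1 \<theta> - g j (-1) \<theta>"] gi by auto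
    also have "\<dots> = (\<Sum>j<m. F (xp dt m u \<eta> j 1) - F (xp dt m u \<eta> j (-1)))"
    proof (intro sum.cong refl)
      fix j assume "j \<in> {..<m}"
      hence "(\<integral>\<theta>. (g j 1 \<theta> - g j (-1) \<theta>) \<partial>\<mu>) = (\<integral>\<theta>. g j 1 \<theta> \<partial>\<mu>) - (\<integral>\<theta>. g j (-1) \<theta> \<partial>\<mu>)"
        using gi by (intro Bochner_Integration.integral_diff) auto
      thus "(\<integral>\<theta>. (g j 1 \<theta> - g j (-1) \<theta>) \<partial>\<mu>) = F (xp dt m u \<eta> j 1) - F (xp dt m u \<eta> j (-1))"
        unfolding F_def net_out_def g_def by simp
    qed
    finally show ?thesis by simp
  qed
  also have "\<dots> \<le> (\<integral>\<theta>. sqrt (Gf m \<eta> m) / 2 \<partial>\<mu>)"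
  proof (rule integral_mono_AE)
    show "integrable \<mu> (\<lambda>\<theta>. \<Sum>j<m. g j 1 \<theta> - g j (-1) \<theta>)" using gi by auto
    have ps: "prob_space \<mu>" using mu unfolding networks_def by auto
    then interpret prob_space \<mu> .
    show "integrable \<mu> (\<lambda>\<theta>. sqrt (Gf m \<eta> m) / 2)" by simp
    have ae: "AE \<theta> in \<mu>. (\<Sum>i<N + 2. (\<theta> i)\<^sup>2) = 1" using mu unfolding networks_def N_def by auto
    show "AE \<theta> in \<mu>. (\<Sum>j<m. g j 1 \<theta> - g j (-1) \<theta>) \<le> sqrt (Gf m \<eta> m) / 2"
      using ae
    proof eventually_elim
      case (elim \<theta>)
      define a where "a = ablk dt u \<theta>"
      have pw: "g j 1 \<theta> - g j (-1) \<theta> = \<theta> 0 * hh (a j - \<eta>*(\<Sum>i<m. a i)) (\<theta> (Suc N))" if j: "j < m" for j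
      proof -
        have p1: "preact N \<theta> (xp dt m u \<eta> j 1) = (a j - \<eta>*(\<Sum>i<m. a i)) + \<theta> (Suc N)"
          using preact_xp[OF dm dt, of j \<theta> u \<eta> 1] j unfolding a_def N_def by simp
        have p2: "preact N \<theta> (xp dt m u \<eta> j (-1)) = \<theta> (Suc N) - (a j - \<eta>*(\<Sum>i<m. a i))"
          using preact_xp[OF dm dt, of j \<theta> u \<eta> "-1"] j unfolding a_def N_def by simp
        show ?thesis unfolding g_def hh_def p1 p2 by (simp add: right_diff_distrib)
      qed
      have "(\<Sum>j<m. g j 1 \<theta> - g j (-1) \<theta>) = (\<Sum>j<m. \<theta> 0 * hh (a j - \<eta>*(\<Sum>i<m. a i)) (\<theta> (Suc N)))"
        by (rule sum.cong) (auto simp: pw)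
      also have "\<dots> = \<theta> 0 * (\<Sum>j<m. hh (a j - \<eta>*(\<Sum>i<m. a i)) (\<theta> (Suc N)))"
        by (rule sum_distrib_left[symmetric])
      also have "\<dots> \<le> sqrt (Gf m \<eta> m) / 2"
      proof (rule key_ineq[OF m1 e0 e1])
        have "(\<Sum>i<m. (a i)\<^sup>2) \<le> (\<Sum>n<N. (\<theta> (Suc n))\<^sup>2)" unfolding a_def N_def by (rule ablk_sq[OF dm un])
        thus "(\<theta> 0)\<^sup>2 + (\<Sum>i<m. (a i)\<^sup>2) + (\<theta> (Suc N))\<^sup>2 \<le> 1" using elim unfolding sum_N2 by linarith
      qed
      finally show ?case .
    qed
  qed
  also have "\<dots> = sqrt (Gf m \<eta> m) / 2"
  proof -
    have ps: "prob_space \<mu>" using mu unfolding networks_def by auto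
    then interpret prob_space \<mu> .
    show ?thesis by (simp add: prob_space)
  qed
  finally have "2*m * margin d dt u \<eta> \<mu> \<le> sqrt (Gf m \<eta> m) / 2" .
  thus ?thesis using m1 by (simp add: field_simps)
qed


lemma Uf_sq:
  assumes dm: "d = 2*m" and un: "sqrt (\<Sum>k<dt. (u k)\<^sup>2) = 1"
  shows "(\<Sum>n<dt*d. (Uf dt m u n)\<^sup>2) = m"
proof -
  have "(\<Sum>n<dt*d. (Uf dt m u n)\<^sup>2) = (\<Sum>n<m*dt. (Uf dt m u n)\<^sup>2)"
    using dm by (intro sum_trunc) (auto simp: Uf_def)
  also have "\<dots> = (\<Sum>i<m. \<Sum>k<dt. (Uf dt m u (i*dt+k))\<^sup>2)" by (rule sum_blocks)
  also have "\<dots> = (\<Sum>i<m. \<Sum>k<dt. (u k)\<^sup>2)"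
  proof (intro sum.cong refl)
    fix i k assume i: "i \<in> {..<m}" and k: "k \<in> {..<dt}"
    have "(i+1)*dt \<le> m*dt" using i by (intro mult_right_mono) auto
    hence "i*dt+k < m*dt" using k by (simp add: algebra_simps)
    thus "(Uf dt m u (i*dt+k))\<^sup>2 = (u k)\<^sup>2" unfolding Uf_def using k by simp
  qed
  also have "\<dots> = m" using un by simp
  finally show ?thesis .
qed

lemma preact_nrn: "preact N (nrn N U w al b) x = al * (\<Sum>n<N. U n * x n) + b"
proof -
  have "(\<Sum>n<N. nrn N U w al b (Suc n) * x n) = (\<Sum>n<N. al * (U n * x n))"
    by (intro sum.cong refl) (simp add: nrn_simps)
  thus ?thesis unfolding preact_def by (simp add: nrn_simps sum_distrib_left)
qed

lemma T_eq:
  assumes dm: "d = 2*m"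
  shows "(\<Sum>n<dt*d. Uf dt m u n * x n) = (\<Sum>n<m*dt. u (n mod dt) * x n)"
proof -
  have "(\<Sum>n<dt*d. Uf dt m u n * x n) = (\<Sum>n<m*dt. Uf dt m u n * x n)"
    using dm by (intro sum_trunc) (auto simp: Uf_def)
  also have "\<dots> = (\<Sum>n<m*dt. u (n mod dt) * x n)" by (intro sum.cong refl) (simp add: Uf_def)
  finally show ?thesis .
qed

lemma primal_point:
  fixes w al \<tau> T y :: real
  assumes w: "w > 0" and al: "al > 0" and t: "\<tau> > 0" and y: "y = 1 \<or> y = -1" and yT: "y * T \<ge> \<tau>"
  shows "y * ((w * relu (al * T + al * \<tau>) + (-w) * relu ((-al) * T + al * \<tau>)) / 2) \<ge> w * al * \<tau>"
    and "relu' (al * T + al * \<tau>) = (if y = 1 then 1 else 0)"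
    and "relu' ((-al) * T + al * \<tau>) = (if y = 1 then 0 else 1)"
proof -
  have wa: "0 < w * al" using w al by simp
  consider "y = 1" "T \<ge> \<tau>" | "y = -1" "T \<le> -\<tau>" using y yT by fastforce
  note cs = this
  show "y * ((w * relu (al * T + al * \<tau>) + (-w) * relu ((-al) * T + al * \<tau>)) / 2) \<ge> w * al * \<tau>"
  proof (cases rule: cs)
    case 1
    have "al * T + al * \<tau> = al * (T + \<tau>)" "(-al) * T + al * \<tau> = al * (\<tau> - T)" by (simp_all add: algebra_simps)
    moreover have "al * (T + \<tau>) > 0" using 1 t al by simp
    moreover have "al * (\<tau> - T) \<le> 0" using 1 al by (simp add: mult_nonneg_nonpos)
    ultimately have "y * ((w * relu (al * T + al * \<tau>) + (-w) * relu ((-al) * T + al * \<tau>)) / 2) = (w*al) * (T + \<tau>) / 2"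
      using 1 unfolding relu_def by (simp add: max_def)
    also have "\<dots> \<ge> (w*al) * (2*\<tau>) / 2" using 1 wa by (intro divide_right_mono mult_left_mono) auto
    finally show ?thesis by simp
  next
    case 2
    have "al * T + al * \<tau> = al * (T + \<tau>)" "(-al) * T + al * \<tau> = al * (\<tau> - T)" by (simp_all add: algebra_simps)
    moreover have "al * (\<tau> - T) > 0" using 2 t al by simp
    moreover have "al * (T + \<tau>) \<le> 0" using 2 al by (simp add: mult_nonneg_nonpos)
    ultimately have "y * ((w * relu (al * T + al * \<tau>) + (-w) * relu ((-al) * T + al * \<tau>)) / 2) = (w*al) * (\<tau> - T) / 2"
      using 2 unfolding relu_def by (simp add: max_def)
    also have "\<dots> \<ge> (w*al) * (2*\<tau>) / 2" using 2 wa by (intro divide_right_mono mult_left_mono) auto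
    finally show ?thesis by simp
  qed
  show "relu' (al * T + al * \<tau>) = (if y = 1 then 1 else 0)"
  proof (cases rule: cs)
    case 1 thus ?thesis using al t unfolding relu'_def by (simp add: add_pos_pos)
  next
    case 2
    have "al * T + al * \<tau> = al * (T + \<tau>)" by (simp add: algebra_simps)
    moreover have "al * (T + \<tau>) \<le> 0" using 2 al by (simp add: mult_nonneg_nonpos)
    ultimately show ?thesis using 2 unfolding relu'_def by simp
  qed
  show "relu' ((-al) * T + al * \<tau>) = (if y = 1 then 0 else 1)"
  proof (cases rule: cs)
    case 1
    have "(-al) * T + al * \<tau> = al * (\<tau> - T)" by (simp add: algebra_simps)
    moreover have "al * (\<tau> - T) \<le> 0" using 1 al by (simp add: mult_nonneg_nonpos)
    ultimately show ?thesis using 1 unfolding relu'_def by simp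
  next
    case 2
    have "(-al) * T + al * \<tau> = al * (\<tau> - T)" by (simp add: algebra_simps)
    moreover have "al * (\<tau> - T) > 0" using 2 t al by simp
    ultimately show ?thesis using 2 unfolding relu'_def by simp
  qed
qed


lemma Gf_sqrt:
  fixes m :: nat and \<eta> :: real
  assumes m1: "m \<ge> 1" and e0: "0 \<le> \<eta>" and e1: "20*m*\<eta> < 1"
  shows "sqrt (Gf m \<eta> m) / (4*m) = (1 - m*\<eta>) / (2 * sqrt (m + (1 - m*\<eta>)\<^sup>2))"
proof -
  define \<tau> where "\<tau> = 1 - m*\<eta>"
  have t0: "\<tau> > 0" using e1 m1 e0 unfolding \<tau>_def by (simp add: mult_nonneg_nonneg)
  have pos: "0 < real m + \<tau>\<^sup>2" using m1 by (simp add: add_pos_nonneg)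
  have "Gf m \<eta> m = (2*m*\<tau>)\<^sup>2/(real m+\<tau>\<^sup>2)"
    using Gf_M[of "real m" \<eta>] m1 e0 e1 unfolding \<tau>_def by (simp add: power_mult_distrib)
  hence "sqrt (Gf m \<eta> m) = 2*m*\<tau> / sqrt (real m+\<tau>\<^sup>2)" using t0 by (simp add: real_sqrt_divide)
  thus ?thesis using m1 unfolding \<tau>_def[symmetric] by (simp add: field_simps)
qed

theorem theorem1:
  fixes d dt :: nat and u :: "nat \<Rightarrow> real" and \<eta> :: real
  assumes "even d" and "d \<ge> 2" and "dt \<ge> 1"
    and "sqrt (\<Sum>k<dt. (u k)\<^sup>2) = 1"
    and "0 \<le> \<eta>" and "\<eta> < 1 / (10 * real d)"
  shows "\<exists>\<nu>. max_margin d dt u \<eta> \<nu> \<and>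
    (\<forall>(x, y)\<in>data_support d dt u \<eta>. \<exists>c > 0.
       (\<forall>j\<in>{1..d div 2}. block_norm dt (loss_grad (dt * d) \<nu> x y) j = c) \<and>
       (\<forall>j\<in>{d div 2 + 1..d}. block_norm dt (loss_grad (dt * d) \<nu> x y) j = 0))"
proof -
  note ev = assms(1) and d2 = assms(2) and dt = assms(3) and un = assms(4) and e0 = assms(5) and eb = assms(6)
  define m where "m = d div 2"
  have dm: "d = 2*m" using ev unfolding m_def by simp
  have m1: "m \<ge> 1" using d2 dm by simp
  have e1: "20*m*\<eta> < 1"
  proof -
    have "0 < real d" using d2 by simp
    hence "\<eta> * (10 * real d) < 1" using eb by (simp add: field_simps)
    thus ?thesis using dm by (simp add: algebra_simps)
  qed
  define \<tau> where "\<tau> = 1 - m*\<eta>"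
  have t0: "\<tau> > 0" using e1 m1 e0 unfolding \<tau>_def by (simp add: mult_nonneg_nonneg)
  have pos: "0 < real m + \<tau>\<^sup>2" using m1 by (simp add: add_pos_nonneg)
  define N where "N = dt*d"
  define U where "U = Uf dt m u"
  define w where "w = 1 / sqrt 2"
  define al where "al = 1 / sqrt (2*(real m+\<tau>\<^sup>2))"
  define b where "b = al*\<tau>"
  define \<nu> where "\<nu> = nustar N U w al b"
  have w0: "w > 0" unfolding w_def by simp
  have al0: "al > 0" unfolding al_def using pos by simp
  have Usq: "(\<Sum>n<N. (U n)\<^sup>2) = m" unfolding N_def U_def by (rule Uf_sq[OF dm un])
  have nrm: "w\<^sup>2 + al\<^sup>2 * (\<Sum>n<N. (U n)\<^sup>2) + b\<^sup>2 = 1"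
  proof -
    have "al\<^sup>2 = 1 / (2*(real m+\<tau>\<^sup>2))" unfolding al_def using pos by (simp add: power_divide)
    moreover have "w\<^sup>2 = 1/2" unfolding w_def by (simp add: power_divide)
    ultimately show ?thesis unfolding Usq b_def using pos by (simp add: power_mult_distrib field_simps)
  qed
  have nuN: "\<nu> \<in> networks N" unfolding \<nu>_def by (rule nustar_networks[OF nrm])
  have mstar: "sqrt (Gf m \<eta> m) / (4*m) = w*al*\<tau>"
  proof -
    have s2: "sqrt 2 * sqrt (2*(real m+\<tau>\<^sup>2)) = 2 * sqrt (real m+\<tau>\<^sup>2)"
    proof -
      have "sqrt 2 * sqrt (2*(real m+\<tau>\<^sup>2)) = (sqrt 2 * sqrt 2) * sqrt (real m+\<tau>\<^sup>2)"
        by (simp only: real_sqrt_mult mult.assoc)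
      thus ?thesis by simp
    qed
    have "w*al = 1 / (sqrt 2 * sqrt (2*(real m+\<tau>\<^sup>2)))" unfolding w_def al_def by simp
    hence "w*al = 1 / (2* sqrt (real m+\<tau>\<^sup>2))" unfolding s2 .
    thus ?thesis using Gf_sqrt[OF m1 e0 e1] unfolding \<tau>_def by simp
  qed
  have T_ge: "y * (\<Sum>n<N. U n * x n) \<ge> \<tau>" and ysg: "y = 1 \<or> y = -1"
    if "(x,y) \<in> data_support d dt u \<eta>" for x y
    using support_T[OF dm dt un e0 that] unfolding N_def U_def T_eq[OF dm] \<tau>_def by auto
  have out: "net_out N \<nu> x = (w * relu (al * (\<Sum>n<N. U n * x n) + al * \<tau>) + (-w) * relu ((-al) * (\<Sum>n<N. U n * x n) + al * \<tau>)) / 2" for x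
    unfolding net_out_def \<nu>_def by (simp add: nustar_integral meas_out nrn_simps preact_nrn b_def)
  have pm: "y * net_out N \<nu> x \<ge> w*al*\<tau>" if "(x,y) \<in> data_support d dt u \<eta>" for x y
    unfolding out using primal_point(1)[OF w0 al0 t0 ysg[OF that] T_ge[OF that]] .
  have nonempty: "data_support d dt u \<eta> \<noteq> {}" using xp_support[OF dm dt un, of 0 1 \<eta>] m1 by auto
  have mnu: "margin d dt u \<eta> \<nu> \<ge> w*al*\<tau>"
    unfolding margin_def N_def[symmetric] using nonempty pm by (intro cINF_greatest) auto
  have mm: "max_margin d dt u \<eta> \<nu>"
    unfolding max_margin_def N_def[symmetric]
  proof (intro conjI ballI)
    show "\<nu> \<in> networks N" by (rule nuN)
    fix \<mu> assume "\<mu> \<in> networks N"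
    hence "margin d dt u \<eta> \<mu> \<le> sqrt (Gf m \<eta> m) / (4*m)"
      using dual_bound[OF dm m1 dt un e0 e1] unfolding N_def by blast
    thus "margin d dt u \<eta> \<mu> \<le> margin d dt u \<eta> \<nu>" using mstar mnu by linarith
  qed
  have grad: "\<forall>(x, y)\<in>data_support d dt u \<eta>. \<exists>c > 0.
       (\<forall>j\<in>{1..d div 2}. block_norm dt (loss_grad (dt * d) \<nu> x y) j = c) \<and>
       (\<forall>j\<in>{d div 2 + 1..d}. block_norm dt (loss_grad (dt * d) \<nu> x y) j = 0)"
  proof (intro ballI, clarify)
    fix x y assume xy: "(x, y) \<in> data_support d dt u \<eta>"
    define T where "T = (\<Sum>n<N. U n * x n)"
    define f where "f = net_out N \<nu> x"
    define \<sigma> where "\<sigma> = exp (- y * f) / (1 + exp (- y * f))"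
    define C where "C = - y * \<sigma> * (w * al / 2)"
    have s0: "\<sigma> > 0" unfolding \<sigma>_def by (simp add: add_pos_pos)
    have C0: "\<bar>C\<bar> > 0" unfolding C_def using s0 w0 al0 ysg[OF xy] by auto
    have r1: "relu' (al * T + al * \<tau>) = (if y = 1 then 1 else 0)"
      and r2: "relu' ((-al) * T + al * \<tau>) = (if y = 1 then 0 else 1)"
      using primal_point(2,3)[OF w0 al0 t0 ysg[OF xy] T_ge[OF xy]] unfolding T_def by auto
    have lg: "loss_grad N \<nu> x y n = C * U n" if n: "n < N" for n
    proof -
      have "(\<integral>\<theta>. \<theta> 0 * relu' (preact N \<theta> x) * \<theta> (Suc n) \<partial>\<nu>)
          = (w * relu' (al * T + al * \<tau>) * (al * U n) + (-w) * relu' ((-al) * T + al * \<tau>) * ((-al) * U n)) / 2"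
        unfolding \<nu>_def using n by (simp add: nustar_integral meas_grad nrn_simps preact_nrn b_def T_def)
      also have "\<dots> = w * al * U n / 2" unfolding r1 r2 using ysg[OF xy] by auto
      finally have I: "(\<integral>\<theta>. \<theta> 0 * relu' (preact N \<theta> x) * \<theta> (Suc n) \<partial>\<nu>) = w * al * U n / 2" .
      show ?thesis unfolding loss_grad_def I C_def \<sigma>_def f_def by (simp add: mult_ac)
    qed
    show "\<exists>c > 0. (\<forall>j\<in>{1..d div 2}. block_norm dt (loss_grad (dt * d) \<nu> x y) j = c) \<and>
       (\<forall>j\<in>{d div 2 + 1..d}. block_norm dt (loss_grad (dt * d) \<nu> x y) j = 0)"
    proof (intro exI[of _ "\<bar>C\<bar>"] conjI ballI C0)
      fix j assume j: "j \<in> {1..d div 2}"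
      have "(\<Sum>k<dt. (loss_grad (dt * d) \<nu> x y ((j - 1) * dt + k))\<^sup>2) = (\<Sum>k<dt. C\<^sup>2 * (u k)\<^sup>2)"
      proof (intro sum.cong refl)
        fix k assume k: "k \<in> {..<dt}"
        have "((j - 1) + 1) * dt \<le> m * dt" using j dm by (intro mult_right_mono) auto
        hence lt: "(j - 1) * dt + k < m*dt" using k by (simp add: algebra_simps)
        hence "(j - 1) * dt + k < N" unfolding N_def using dm by (simp add: mult.commute)
        hence "loss_grad (dt * d) \<nu> x y ((j - 1) * dt + k) = C * U ((j - 1) * dt + k)" using lg unfolding N_def by simp
        also have "U ((j - 1) * dt + k) = u k" unfolding U_def Uf_def using lt k by simp
        finally show "(loss_grad (dt * d) \<nu> x y ((j - 1) * dt + k))\<^sup>2 = C\<^sup>2 * (u k)\<^sup>2" by (simp add: power_mult_distrib)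
      qed
      also have "\<dots> = C\<^sup>2" using un by (simp add: sum_distrib_left[symmetric])
      finally show "block_norm dt (loss_grad (dt * d) \<nu> x y) j = \<bar>C\<bar>" unfolding block_norm_def by simp
    next
      fix j assume j: "j \<in> {d div 2 + 1..d}"
      have "(\<Sum>k<dt. (loss_grad (dt * d) \<nu> x y ((j - 1) * dt + k))\<^sup>2) = 0"
      proof (intro sum.neutral ballI)
        fix k assume k: "k \<in> {..<dt}"
        have "m * dt \<le> (j - 1) * dt" using j dm by (intro mult_right_mono) auto
        hence ge: "\<not> (j - 1) * dt + k < m*dt" by linarith
        have "(j - 1) * dt + k < (j - 1) * dt + dt" using k by simp
        also have "\<dots> = j * dt" using j by (cases j) auto
        also have "\<dots> \<le> d * dt" using j by (intro mult_right_mono) auto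
        finally have "(j - 1) * dt + k < N" unfolding N_def by (simp add: mult.commute)
        hence "loss_grad (dt * d) \<nu> x y ((j - 1) * dt + k) = C * U ((j - 1) * dt + k)" using lg unfolding N_def by simp
        also have "U ((j - 1) * dt + k) = 0" unfolding U_def Uf_def using ge by simp
        finally show "(loss_grad (dt * d) \<nu> x y ((j - 1) * dt + k))\<^sup>2 = 0" by simp
      qed
      thus "block_norm dt (loss_grad (dt * d) \<nu> x y) j = 0" unfolding block_norm_def by simp
    qed
  qed
  show ?thesis using mm grad by blast
qed

end
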